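(* Let $p\in(1,\infty)$ and $Z$ a countable discrete measure space, and fix a bijection $Z\cong\mathbb N$, giving the standard Schauder basis $\{e_i\}_{i\in\mathbb N}$ of $\ell^p(Z)$. Let $F_n$ be the coordinate projection onto the span of $e_1,\dots,e_n$. Then for every $K\in\mathcal K^*(\ell^p(Z))$ we have $\lim_{n\to\infty}F_nKF_n=K$ in $\mathcal K^*(\ell^p(Z))$, i.e. $\|F_nKF_n-K\|_{\max}\to0$.
   Context: An operator $T$ on $\ell^p(Z)$ is regarded as a matrix with respect to $\{e_i\}$ and $T^*$ denotes the transpose matrix. $T$ is a dual-operator if $T$ and $T^*$ are both bounded on $\ell^p(Z)$; its maximal norm is $\|T\|_{\max}=\max\{\|T\|,\|T^*\|\}$. $T$ is a compact dual-operator if $T$ and $T^*$ are both compact operators on $\ell^p(Z)$. $\mathcal K^*(\ell^p(Z))$ is the Banach space of compact dual-operators with the maximal norm. *)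

theory Defs
  imports "HOL-Analysis.Analysis"
begin

text \<open>Vectors of l^p(Z), with Z identified with nat via the fixed bijection
  (index i corresponds to basis vector e_(i+1)); complex scalars.\<close>

type_synonym vec = "nat \<Rightarrow> complex"
type_synonym mat = "nat \<Rightarrow> nat \<Rightarrow> complex"

definition in_lp :: "real \<Rightarrow> vec \<Rightarrow> bool" where
  "in_lp p x \<longleftrightarrow> summable (\<lambda>i. norm (x i) powr p)"

definition lp_norm :: "real \<Rightarrow> vec \<Rightarrow> real" where
  "lp_norm p x = (\<Sum>i. norm (x i) powr p) powr (1 / p)"

definition mat_apply :: "mat \<Rightarrow> vec \<Rightarrow> vec" where
  "mat_apply T x = (\<lambda>i. \<Sum>j. T i j * x j)"

definition bounded_op :: "real \<Rightarrow> mat \<Rightarrow> bool" where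
  "bounded_op p T \<longleftrightarrow>
     (\<forall>x. in_lp p x \<longrightarrow> (\<forall>i. summable (\<lambda>j. T i j * x j)) \<and> in_lp p (mat_apply T x)) \<and>
     (\<exists>C. \<forall>x. in_lp p x \<longrightarrow> lp_norm p (mat_apply T x) \<le> C * lp_norm p x)"

definition op_norm :: "real \<Rightarrow> mat \<Rightarrow> real" where
  "op_norm p T = Sup {lp_norm p (mat_apply T x) | x. in_lp p x \<and> lp_norm p x \<le> 1}"

definition compact_op :: "real \<Rightarrow> mat \<Rightarrow> bool" where
  "compact_op p T \<longleftrightarrow> bounded_op p T \<and>
     (\<forall>x :: nat \<Rightarrow> vec. (\<forall>n. in_lp p (x n) \<and> lp_norm p (x n) \<le> 1) \<longrightarrow>
        (\<exists>r y. strict_mono r \<and> in_lp p y \<and>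
           (\<lambda>n. lp_norm p (\<lambda>i. mat_apply T (x (r n)) i - y i)) \<longlonglongrightarrow> 0))"

definition transpose_mat :: "mat \<Rightarrow> mat" where
  "transpose_mat T = (\<lambda>i j. T j i)"

definition dual_op :: "real \<Rightarrow> mat \<Rightarrow> bool" where
  "dual_op p T \<longleftrightarrow> bounded_op p T \<and> bounded_op p (transpose_mat T)"

definition compact_dual_op :: "real \<Rightarrow> mat \<Rightarrow> bool" where
  "compact_dual_op p T \<longleftrightarrow> compact_op p T \<and> compact_op p (transpose_mat T)"

definition max_norm :: "real \<Rightarrow> mat \<Rightarrow> real" where
  "max_norm p T = max (op_norm p T) (op_norm p (transpose_mat T))"

text \<open>F_n: coordinate projection onto span{e_1,...,e_n} (indices 0..n-1).\<close>
definition proj_mat :: "nat \<Rightarrow> mat" where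
  "proj_mat n = (\<lambda>i j. if i = j \<and> i < n then 1 else 0)"

definition compress :: "nat \<Rightarrow> mat \<Rightarrow> mat" where
  "compress n K = (\<lambda>i j. if i < n \<and> j < n then K i j else 0)"

end

theory Submission
  imports Defs
begin


lemma lp_sum_nonneg: "in_lp p x \<Longrightarrow> 0 \<le> (\<Sum>i. norm (x i) powr p)"
  unfolding in_lp_def by (intro suminf_nonneg) auto

lemma lp_norm_nonneg: "0 \<le> lp_norm p x"
  by (simp add: lp_norm_def)

lemma lp_norm_pow: assumes "p > 0" "in_lp p x" shows "lp_norm p x powr p = (\<Sum>i. norm (x i) powr p)"
  using lp_sum_nonneg[of p x] assms by (simp add: lp_norm_def powr_powr)

lemma powr_le_iff_base: "0 \<le> a \<Longrightarrow> 0 \<le> b \<Longrightarrow> (p::real) > 0 \<Longrightarrow> a \<le> b \<longleftrightarrow> a powr p \<le> b powr p"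
  using powr_mono2[of p a b] powr_less_mono2[of p b a] by (auto simp: not_le[symmetric])

lemma lp_norm_le_iff: assumes "p > 0" "c \<ge> 0" "in_lp p x"
  shows "lp_norm p x \<le> c \<longleftrightarrow> (\<Sum>i. norm (x i) powr p) \<le> c powr p"
  using powr_le_iff_base[of "lp_norm p x" c p] lp_norm_nonneg[of p x] assms lp_norm_pow[OF assms(1,3)] by simp

lemma lp_zero: "lp_norm p (\<lambda>i. 0) = 0" "in_lp p (\<lambda>i. 0)"
  by (auto simp: lp_norm_def in_lp_def)

lemma lp_compare:
  assumes "p > 0" "in_lp p x" "\<And>i. norm (y i) \<le> norm (x i)"
  shows "in_lp p y" "lp_norm p y \<le> lp_norm p x"
proof -
  have le: "norm (y i) powr p \<le> norm (x i) powr p" for i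
    using assms by (simp add: powr_mono2)
  show "in_lp p y" using assms(2) unfolding in_lp_def
    by (rule summable_comparison_test'[where N=0]) (use le in auto)
  then have "(\<Sum>i. norm (y i) powr p) \<le> (\<Sum>i. norm (x i) powr p)"
    using assms(2) le unfolding in_lp_def by (intro suminf_le) auto
  then show "lp_norm p y \<le> lp_norm p x"
    unfolding lp_norm_def using assms(1) lp_sum_nonneg[OF \<open>in_lp p y\<close>]
    by (intro powr_mono2) auto
qed

lemma lp_coord: assumes "p > 0" "in_lp p x" shows "norm (x i) \<le> lp_norm p x"
proof -
  have "norm (x i) powr p \<le> (\<Sum>i. norm (x i) powr p)"
    using assms unfolding in_lp_def using sum_le_suminf[of "\<lambda>i. norm (x i) powr p" "{i}"] by auto  
  then show ?thesis using powr_le_iff_base[of "norm (x i)" "lp_norm p x" p] lp_norm_nonneg[of p x] assms lp_norm_pow[OF assms] by simp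
qed



lemma conv_real:
  fixes a b t p :: real
  assumes "a \<ge> 0" "b \<ge> 0" "0 \<le> t" "t \<le> 1" "p \<ge> 1"
  shows "(t * a + (1 - t) * b) powr p \<le> t * a powr p + (1 - t) * b powr p"
proof (cases "a > 0 \<and> b > 0")
  case True
  then have "((1 - t) * b + t * a) powr p \<le> (1 - t) * b powr p + t * a powr p"
    using convex_onD[OF powr_convex[OF assms(5)], of t b a] assms by auto
  then show ?thesis by (simp add: add.commute)
next
  case False
  have pw: "s powr p \<le> s" if "0 \<le> s" "s \<le> 1" for s :: real
    using that assms(5) powr_mono'[of 1 p s] by (cases "s = 0") auto
  from False assms(1,2) consider "a = 0" | "b = 0" by linarith
  then show ?thesis
  proof cases
    case 1
    have "((1 - t) * b) powr p = (1 - t) powr p * b powr p"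
      using assms by (simp add: powr_mult)
    also have "\<dots> \<le> (1 - t) * b powr p"
      using pw[of "1 - t"] assms by (intro mult_right_mono) auto
    finally show ?thesis using 1 assms by simp
  next
    case 2
    have "(t * a) powr p = t powr p * a powr p"
      using assms by (simp add: powr_mult)
    also have "\<dots> \<le> t * a powr p"
      using pw[of t] assms by (intro mult_right_mono) auto
    finally show ?thesis using 2 assms by simp
  qed
qed

lemma lp_zero_norm:
  assumes "p > 0" "in_lp p x" "lp_norm p x = 0" shows "x = (\<lambda>i. 0)"
proof -
  have "(\<Sum>i. norm (x i) powr p) = 0"
    using lp_norm_pow[OF assms(1,2)] assms(3) by simp
  then have "\<forall>i. norm (x i) powr p = 0"
    using assms(2) unfolding in_lp_def by (subst (asm) suminf_eq_zero_iff) auto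
  then show ?thesis by auto
qed

lemma minkowski:
  assumes p: "p \<ge> 1" and x: "in_lp p x" and y: "in_lp p y"
  shows "in_lp p (\<lambda>i. x i + y i)" "lp_norm p (\<lambda>i. x i + y i) \<le> lp_norm p x + lp_norm p y"
proof -
  define A where "A = lp_norm p x"
  define B where "B = lp_norm p y"
  have p0: "p > 0" using p by auto
  have "in_lp p (\<lambda>i. x i + y i) \<and> lp_norm p (\<lambda>i. x i + y i) \<le> A + B"
  proof (cases "A = 0 \<or> B = 0")
    case True
    then show ?thesis
    proof
      assume "A = 0"
      then have "x = (\<lambda>i. 0)" using lp_zero_norm[OF p0 x] A_def by simp
      then show ?thesis using y \<open>A = 0\<close> B_def by simp
    next
      assume "B = 0"
      then have "y = (\<lambda>i. 0)" using lp_zero_norm[OF p0 y] B_def by simp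
      then show ?thesis using x \<open>B = 0\<close> A_def by simp
    qed
  next
    case False
    then have A: "A > 0" and B: "B > 0" using lp_norm_nonneg A_def B_def
      by (metis less_eq_real_def)+
    define t where "t = A / (A + B)"
    have t: "0 \<le> t" "t \<le> 1" "1 - t = B / (A + B)" using A B by (auto simp: t_def field_simps)
    have SA: "(\<Sum>i. norm (x i) powr p) = A powr p" using lp_norm_pow[OF p0 x] A_def by simp
    have SB: "(\<Sum>i. norm (y i) powr p) = B powr p" using lp_norm_pow[OF p0 y] B_def by simp
    define g where "g i = t * (norm (x i) powr p / A powr p) + (1 - t) * (norm (y i) powr p / B powr p)" for i
    have le: "norm (x i + y i) powr p / (A + B) powr p \<le> g i" for i
    proof -
      have "norm (x i + y i) powr p / (A + B) powr p = (norm (x i + y i) / (A + B)) powr p"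
        using A B by (simp add: powr_divide)
      also have "\<dots> \<le> (t * (norm (x i) / A) + (1 - t) * (norm (y i) / B)) powr p"
      proof (rule powr_mono2)
        have "t * (norm (x i) / A) + (1 - t) * (norm (y i) / B) = (norm (x i) + norm (y i)) / (A + B)"
        proof -
          have "t * (norm (x i) / A) = norm (x i) / (A + B)" using A B unfolding t_def by simp
          moreover have "(1 - t) * (norm (y i) / B) = norm (y i) / (A + B)" using A B unfolding t(3) by simp
          ultimately show ?thesis by (simp add: add_divide_distrib)
        qed
        moreover have "norm (x i + y i) / (A + B) \<le> (norm (x i) + norm (y i)) / (A + B)"
          using A B by (intro divide_right_mono norm_triangle_ineq) auto
        ultimately show "norm (x i + y i) / (A + B) \<le> t * (norm (x i) / A) + (1 - t) * (norm (y i) / B)" by simp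
      qed (use p A B in auto)
      also have "\<dots> \<le> t * (norm (x i) / A) powr p + (1 - t) * (norm (y i) / B) powr p"
        using conv_real[of "norm (x i) / A" "norm (y i) / B" t p] A B t p by auto
      also have "\<dots> = g i" using A B by (simp add: g_def powr_divide)
      finally show ?thesis .
    qed
    have sg: "g sums (t * (A powr p / A powr p) + (1 - t) * (B powr p / B powr p))"
      unfolding g_def using x y SA SB unfolding in_lp_def
      by (intro sums_add sums_mult sums_divide) (metis summable_sums)+
    then have sg1: "g sums 1" using A B by simp
    have summ: "summable (\<lambda>i. norm (x i + y i) powr p / (A + B) powr p)"
      by (rule summable_comparison_test'[where N=0, OF sums_summable[OF sg1]]) (use le in auto)
    have AB: "(A + B) powr p > 0" using A B by simp
    have summ2: "summable (\<lambda>i. norm (x i + y i) powr p)"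
      using summable_mult[OF summ, of "(A + B) powr p"] AB by simp
    have "(\<Sum>i. norm (x i + y i) powr p / (A + B) powr p) \<le> 1"
      using suminf_le[OF le summ sums_summable[OF sg1]] sums_unique[OF sg1] by simp
    then have "(\<Sum>i. norm (x i + y i) powr p) / (A + B) powr p \<le> 1"
      using suminf_divide[OF summ2, of "(A + B) powr p"] by simp
    then have "(\<Sum>i. norm (x i + y i) powr p) \<le> (A + B) powr p" using AB by simp
    moreover have ilp: "in_lp p (\<lambda>i. x i + y i)" using summ2 by (simp add: in_lp_def)
    ultimately show ?thesis using lp_norm_le_iff[OF p0 _ ilp, of "A + B"] A B by simp
  qed
  then show "in_lp p (\<lambda>i. x i + y i)" "lp_norm p (\<lambda>i. x i + y i) \<le> lp_norm p x + lp_norm p y"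
    by (auto simp: A_def B_def)
qed

lemma lp_uminus: "in_lp p (\<lambda>i. - x i) = in_lp p x" "lp_norm p (\<lambda>i. - x i) = lp_norm p x"
  by (auto simp: in_lp_def lp_norm_def)

lemma lp_diff:
  assumes p: "p \<ge> 1" and x: "in_lp p x" and y: "in_lp p y"
  shows "in_lp p (\<lambda>i. x i - y i)" "lp_norm p (\<lambda>i. x i - y i) \<le> lp_norm p x + lp_norm p y"
  using minkowski[OF p x, of "\<lambda>i. - y i"] y lp_uminus[of p y] by auto

lemma lp_norm_commute: "lp_norm p (\<lambda>i. x i - y i) = lp_norm p (\<lambda>i. y i - x i)"
  by (simp add: lp_norm_def norm_minus_commute)

lemma lp_tri:
  assumes p: "p \<ge> 1" and "in_lp p a" "in_lp p b" "in_lp p c"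
  shows "lp_norm p (\<lambda>i. a i - c i) \<le> lp_norm p (\<lambda>i. a i - b i) + lp_norm p (\<lambda>i. b i - c i)"
  using minkowski(2)[OF p lp_diff(1)[OF p assms(2,3)] lp_diff(1)[OF p assms(3,4)]] by simp



definition trunc :: "nat \<Rightarrow> vec \<Rightarrow> vec" where
  "trunc n v = (\<lambda>i. if i < n then v i else 0)"

lemma trunc_lp: assumes "p > 0" "in_lp p x"
  shows "in_lp p (trunc n x)" "lp_norm p (trunc n x) \<le> lp_norm p x"
  using lp_compare[OF assms, of "trunc n x"] by (auto simp: trunc_def)

lemma tail_lp: assumes "p > 0" "in_lp p x"
  shows "in_lp p (\<lambda>i. x i - trunc n x i)" "lp_norm p (\<lambda>i. x i - trunc n x i) \<le> lp_norm p x"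
  using lp_compare[OF assms, of "\<lambda>i. x i - trunc n x i"] by (auto simp: trunc_def)

lemma suminf_tail_eq:
  fixes f :: "nat \<Rightarrow> real"
  assumes "summable f"
  shows "(\<Sum>j. if j < N then 0 else f j) = (\<Sum>k. f (k + N))"
proof -
  have "summable (\<lambda>k. f (k + N))" using assms by (simp add: summable_iff_shift)
  then have "summable (\<lambda>k. (\<lambda>j. if j < N then 0 else f j) (k + N))" by simp
  then have s: "summable (\<lambda>j. if j < N then 0 else f j)"
    using summable_iff_shift[of "(\<lambda>j. if j < N then 0 else f j)" N] by simp
  show ?thesis using suminf_split_initial_segment[OF s, of N] by simp
qed

lemma trunc_conv: assumes "p > 0" "in_lp p y"
  shows "(\<lambda>n. lp_norm p (\<lambda>i. trunc n y i - y i)) \<longlonglongrightarrow> 0"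
proof -
  have f: "summable (\<lambda>i. norm (y i) powr p)" using assms by (simp add: in_lp_def)
  have eq: "lp_norm p (\<lambda>i. trunc n y i - y i) = (\<Sum>k. norm (y (k + n)) powr p) powr (1 / p)" for n
  proof -
    have "(\<lambda>i. norm (trunc n y i - y i) powr p) = (\<lambda>j. if j < n then 0 else norm (y j) powr p)"
      using assms(1) by (auto simp: trunc_def)
    then show ?thesis using suminf_tail_eq[OF f, of n] by (simp add: lp_norm_def)
  qed
  have "(\<lambda>n. (\<Sum>k. norm (y (k + n)) powr p) powr (1 / p)) \<longlonglongrightarrow> 0"
  proof (rule tendsto_zero_powrI[where b="1 / p"])
    show "(\<lambda>n. \<Sum>k. norm (y (k + n)) powr p) \<longlonglongrightarrow> 0" by (rule suminf_exist_split2[OF f])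
    show "\<forall>\<^sub>F n in sequentially. 0 \<le> (\<Sum>k. norm (y (k + n)) powr p)"
    proof (intro always_eventually allI suminf_nonneg)
      fix n show "summable (\<lambda>k. norm (y (k + n)) powr p)"
        using f summable_iff_shift[of "\<lambda>i. norm (y i) powr p" n] by simp
    qed auto
  qed (use assms in auto)
  then show ?thesis using eq by simp
qed

lemma lim_coord: assumes "p > 0" "\<And>k. in_lp p (\<lambda>i. a k i - y i)"
  "(\<lambda>k. lp_norm p (\<lambda>i. a k i - y i)) \<longlonglongrightarrow> 0"
  shows "(\<lambda>k. a k i) \<longlonglongrightarrow> y i"
proof -
  have "\<forall>k. norm (a k i - y i) \<le> lp_norm p (\<lambda>i. a k i - y i)"
    using lp_coord[OF assms(1,2)] by blast
  then have "(\<lambda>k. a k i - y i) \<longlonglongrightarrow> 0"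
    by (rule Lim_null_comparison[OF always_eventually assms(3)])
  then show ?thesis by (simp add: LIM_zero_iff)
qed

lemma bop_summable: "bounded_op p K \<Longrightarrow> in_lp p x \<Longrightarrow> summable (\<lambda>j. K i j * x j)"
  by (simp add: bounded_op_def)

lemma bop_in_lp: "bounded_op p K \<Longrightarrow> in_lp p x \<Longrightarrow> in_lp p (mat_apply K x)"
  by (simp add: bounded_op_def)

lemma mat_apply_diff: assumes "bounded_op p K" "in_lp p x" "in_lp p y"
  shows "mat_apply K x i - mat_apply K y i = (\<Sum>j. K i j * (x j - y j))"
  unfolding mat_apply_def using suminf_diff[OF bop_summable[OF assms(1,2)] bop_summable[OF assms(1,3)]]
  by (simp add: algebra_simps)

lemma mat_apply_D: assumes "bounded_op p K" "in_lp p x"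
  shows "mat_apply (\<lambda>i j. compress n K i j - K i j) x i = trunc n (mat_apply K (trunc n x)) i - mat_apply K x i"
proof -
  have s1: "summable (\<lambda>j. compress n K i j * x j)"
    by (rule summable_finite[of "{..<n}"]) (auto simp: compress_def)
  have "mat_apply (\<lambda>i j. compress n K i j - K i j) x i = (\<Sum>j. compress n K i j * x j) - mat_apply K x i"
    unfolding mat_apply_def using suminf_diff[OF s1 bop_summable[OF assms]] by (simp add: algebra_simps)
  moreover have "(\<Sum>j. compress n K i j * x j) = trunc n (mat_apply K (trunc n x)) i"
  proof (cases "i < n")
    case True
    then have "(\<lambda>j. compress n K i j * x j) = (\<lambda>j. K i j * trunc n x j)"
      by (auto simp: compress_def trunc_def fun_eq_iff)
    then show ?thesis using True by (simp add: trunc_def mat_apply_def)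
  next
    case False
    then have "(\<lambda>j. compress n K i j * x j) = (\<lambda>j. 0)"
      by (auto simp: compress_def fun_eq_iff)
    then show ?thesis using False by (simp add: trunc_def)
  qed
  ultimately show ?thesis by simp
qed

lemma op_norm_le: assumes "p > 0" "e \<ge> 0" "\<And>x. in_lp p x \<Longrightarrow> lp_norm p x \<le> 1 \<Longrightarrow> lp_norm p (mat_apply T x) \<le> e"
  shows "0 \<le> op_norm p T" "op_norm p T \<le> e"
proof -
  let ?S = "{lp_norm p (mat_apply T x) | x. in_lp p x \<and> lp_norm p x \<le> 1}"
  have z: "mat_apply T (\<lambda>i. 0) = (\<lambda>i. 0)" by (simp add: mat_apply_def)
  have "0 = lp_norm p (mat_apply T (\<lambda>i. 0)) \<and> in_lp p (\<lambda>i. 0) \<and> lp_norm p (\<lambda>i. 0) \<le> 1"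
    using lp_zero[of p] z by simp
  then have "0 \<in> ?S" by blast
  moreover have "bdd_above ?S"
  proof (rule bdd_aboveI[of _ e])
    fix v assume "v \<in> ?S"
    then obtain x where "v = lp_norm p (mat_apply T x)" "in_lp p x" "lp_norm p x \<le> 1" by blast
    then show "v \<le> e" using assms(3) by simp
  qed
  ultimately show "0 \<le> op_norm p T" unfolding op_norm_def by (rule cSup_upper)
  show "op_norm p T \<le> e" unfolding op_norm_def
  proof (rule cSup_least)
    show "?S \<noteq> {}" using \<open>0 \<in> ?S\<close> by blast
  next
    fix v assume "v \<in> ?S"
    then obtain x where "v = lp_norm p (mat_apply T x)" "in_lp p x" "lp_norm p x \<le> 1" by blast
    then show "v \<le> e" using assms(3) by simp
  qed
qed



lemma summable_tail_if:
  fixes f :: "nat \<Rightarrow> real"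
  assumes "summable f" shows "summable (\<lambda>j. if j < N then 0 else f j)"
proof -
  have "summable (\<lambda>k. f (k + N))" using assms by (simp add: summable_iff_shift)
  then have "summable (\<lambda>k. (\<lambda>j. if j < N then 0 else f j) (k + N))" by simp
  then show ?thesis
    using summable_iff_shift[of "(\<lambda>j. if j < N then 0 else f j)" N] by simp
qed

lemma row_lq:
  assumes p: "p > 1" and K: "bounded_op p K"
  shows "summable (\<lambda>j. norm (K i j) powr (p / (p - 1)))"
proof -
  define q where "q = p / (p - 1)"
  have q1: "q > 1" using p by (simp add: q_def field_simps)
  have qp: "(q - 1) * p = q" using p by (simp add: q_def field_simps)
  have pq: "1 / p + 1 / q = 1" using p by (simp add: q_def field_simps)
  from K obtain C where C: "\<And>x. in_lp p x \<Longrightarrow> lp_norm p (mat_apply K x) \<le> C * lp_norm p x"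
    unfolding bounded_op_def by blast
  define a where "a j = norm (K i j)" for j
  have "summable (\<lambda>j. a j powr q)"
  proof (rule summableI_nonneg_bounded[where x="\<bar>C\<bar> powr q"])
    fix M
    define S where "S = (\<Sum>j<M. a j powr q)"
    have S0: "S \<ge> 0" unfolding S_def by (intro sum_nonneg) auto
    define x where "x j = (if j < M \<and> K i j \<noteq> 0 then cnj (K i j) * of_real (a j powr (q - 2)) else 0)" for j
    have nx: "norm (x j) powr p = (if j < M then a j powr q else 0)" for j
    proof (cases "j < M \<and> K i j \<noteq> 0")
      case True
      then have a0: "a j > 0" by (simp add: a_def)
      have "norm (x j) = a j * a j powr (q - 2)"
        using True a0 by (simp add: x_def a_def norm_mult)
      also have "\<dots> = a j powr (q - 1)"
        using a0 powr_add[of "a j" 1 "q - 2"] by simp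
      finally have "norm (x j) powr p = a j powr ((q - 1) * p)" by (simp add: powr_powr)
      then show ?thesis using qp True by simp
    next
      case False
      then show ?thesis using q1 by (auto simp: x_def a_def)
    qed
    have kx: "K i j * x j = of_real (if j < M then a j powr q else 0)" for j
    proof (cases "j < M \<and> K i j \<noteq> 0")
      case True
      then have a0: "a j > 0" by (simp add: a_def)
      have "K i j * x j = (K i j * cnj (K i j)) * of_real (a j powr (q - 2))"
        using True by (simp add: x_def)
      also have "\<dots> = of_real (a j powr 2 * a j powr (q - 2))"
        using a0 by (simp add: complex_norm_square[symmetric] a_def powr_numeral)
      also have "\<dots> = of_real (a j powr q)"
        using a0 powr_add[of "a j" 2 "q - 2"] by simp
      finally show ?thesis using True by simp
    next
      case False
      then show ?thesis using q1 by (auto simp: x_def a_def)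
    qed
    have xl: "in_lp p x" unfolding in_lp_def
      by (rule summable_finite[of "{..<M}"]) (use nx in auto)
    have "(\<Sum>j. norm (x j) powr p) = S"
      unfolding S_def by (subst suminf_finite[of "{..<M}"]) (use nx in auto)
    then have lx: "lp_norm p x = S powr (1 / p)" by (simp add: lp_norm_def)
    have "(\<Sum>j. K i j * x j) = (\<Sum>j<M. of_real (a j powr q))"
      by (subst suminf_finite[of "{..<M}"]) (use kx in auto)
    then have mx: "mat_apply K x i = of_real S" by (simp add: mat_apply_def S_def)
    have "S = norm (mat_apply K x i)" using mx S0 by simp
    also have "\<dots> \<le> lp_norm p (mat_apply K x)"
      using lp_coord[OF _ bop_in_lp[OF K xl]] p by simp
    also have "\<dots> \<le> C * S powr (1 / p)" using C[OF xl] lx by simp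
    finally have SC: "S \<le> C * S powr (1 / p)" .
    show "(\<Sum>j<M. a j powr q) \<le> \<bar>C\<bar> powr q"
    proof (cases "S = 0")
      case True then show ?thesis unfolding S_def[symmetric] by simp
    next
      case False
      then have Sp: "S > 0" using S0 by simp
      have "S = S powr (1 / p) * S powr (1 / q)"
        using Sp pq powr_add[of S "1/p" "1/q"] by simp
      then have "S powr (1 / p) * S powr (1 / q) \<le> S powr (1 / p) * C"
        using SC by (simp add: mult.commute)
      then have "S powr (1 / q) \<le> C" using Sp by simp
      then have "S powr (1 / q) \<le> \<bar>C\<bar>" by simp
      then have "(S powr (1 / q)) powr q \<le> \<bar>C\<bar> powr q" using q1
        by (intro powr_mono2) auto
      then show ?thesis using Sp q1 unfolding S_def[symmetric] by (simp add: powr_powr)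
    qed
  qed auto
  then show ?thesis by (simp add: a_def q_def)
qed



lemma row_tail:
  assumes p: "p > 1" and K: "bounded_op p K" and e: "e > 0"
  shows "\<exists>N. \<forall>w. in_lp p w \<and> lp_norm p w \<le> 1 \<and> (\<forall>j<N. w j = 0) \<longrightarrow> norm (\<Sum>j. K i j * w j) \<le> e"
proof -
  define q where "q = p / (p - 1)"
  have q1: "q > 1" using p by (simp add: q_def field_simps)
  have pq: "1 / p + 1 / q = 1" using p by (simp add: q_def field_simps)
  define f where "f j = norm (K i j) powr q" for j
  have fs: "summable f" using row_lq[OF p K, of i] by (simp add: f_def[abs_def] q_def)
  define s where "s = (e * p / 2) powr (1 / p)"
  have s0: "s > 0" using e p by (simp add: s_def)
  have sp: "s powr p = e * p / 2" using e p by (simp add: s_def powr_powr)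
  define c where "c = q * s powr q"
  have c0: "c > 0" using q1 s0 by (simp add: c_def)
  obtain N where N: "\<And>n. n \<ge> N \<Longrightarrow> norm (\<Sum>k. f (k + n)) < e / 2 * c"
    using suminf_exist_split[OF _ fs, of "e / 2 * c"] e c0 by auto
  show ?thesis
  proof (intro exI allI impI, elim conjE)
    fix w assume wl: "in_lp p w" and w1: "lp_norm p w \<le> 1" and w0: "\<forall>j<N. w j = 0"
    define h where "h j = (if j < N then 0 else f j) / c + s powr p * norm (w j) powr p / p" for j
    have bd: "norm (K i j * w j) \<le> h j" for j
    proof (cases "j < N")
      case True
      then show ?thesis using w0 p by (simp add: h_def)
    next
      case False
      have "norm (K i j * w j) = (s * norm (w j)) * (norm (K i j) / s)"
        using s0 by (simp add: norm_mult)
      also have "\<dots> \<le> (s * norm (w j)) powr p / p + (norm (K i j) / s) powr q / q"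
        using Youngs_inequality[OF p q1 pq, of "s * norm (w j)" "norm (K i j) / s"] s0 by simp
      also have "\<dots> = h j"
        using False s0 by (simp add: h_def powr_mult powr_divide f_def c_def field_simps)
      finally show ?thesis .
    qed
    have ws: "summable (\<lambda>j. norm (w j) powr p)" using wl by (simp add: in_lp_def)
    have w1': "(\<Sum>j. norm (w j) powr p) \<le> 1"
      using lp_norm_le_iff[of p 1 w] p wl w1 by simp
    have t1: "(\<lambda>j. (if j < N then 0 else f j) / c) sums ((\<Sum>k. f (k + N)) / c)"
      using summable_sums[OF summable_tail_if[OF fs, of N]] suminf_tail_eq[OF fs, of N]
      by (intro sums_divide) simp
    have t2: "(\<lambda>j. s powr p * norm (w j) powr p / p) sums (s powr p * (\<Sum>j. norm (w j) powr p) / p)"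
      by (intro sums_divide sums_mult summable_sums ws)
    have hs: "h sums ((\<Sum>k. f (k + N)) / c + s powr p * (\<Sum>j. norm (w j) powr p) / p)"
      unfolding h_def by (rule sums_add[OF t1 t2])
    have "(\<Sum>k. f (k + N)) / c \<le> e / 2"
      using N[of N] c0 by (simp add: divide_le_eq)
    moreover have "s powr p * (\<Sum>j. norm (w j) powr p) / p \<le> e / 2"
    proof -
      have "s powr p * (\<Sum>j. norm (w j) powr p) \<le> s powr p * 1"
        using w1' by (intro mult_left_mono) auto
      then have "s powr p * (\<Sum>j. norm (w j) powr p) / p \<le> s powr p / p"
        by (intro divide_right_mono) (use p in auto)
      also have "s powr p / p = e / 2" using sp p by simp
      finally show ?thesis .
    qed
    ultimately have hle: "suminf h \<le> e" using sums_unique[OF hs] by linarith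
    have ns: "summable (\<lambda>j. norm (K i j * w j))"
      by (rule summable_comparison_test'[where N=0, OF sums_summable[OF hs]]) (use bd in auto)
    have "norm (\<Sum>j. K i j * w j) \<le> (\<Sum>j. norm (K i j * w j))" by (rule summable_norm[OF ns])
    also have "\<dots> \<le> suminf h" by (rule suminf_le[OF bd ns sums_summable[OF hs]])
    finally show "norm (\<Sum>j. K i j * w j) \<le> e" using hle by simp
  qed
qed



lemma main_L:
  assumes p: "p > 1" and K: "compact_op p K" and e: "e > 0"
  shows "\<exists>N. \<forall>n\<ge>N. \<forall>x. in_lp p x \<and> lp_norm p x \<le> 1 \<longrightarrow>
           lp_norm p (mat_apply (\<lambda>i j. compress n K i j - K i j) x) \<le> e"
proof (rule ccontr)
  have p0: "p > 0" and p1: "p \<ge> 1" using p by auto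
  have Kb: "bounded_op p K" using K by (simp add: compact_op_def)
  have Kc: "\<And>x :: nat \<Rightarrow> vec. (\<forall>n. in_lp p (x n) \<and> lp_norm p (x n) \<le> 1) \<Longrightarrow>
        (\<exists>r y. strict_mono r \<and> in_lp p y \<and>
           (\<lambda>n. lp_norm p (\<lambda>i. mat_apply K (x (r n)) i - y i)) \<longlonglongrightarrow> 0)"
    using K by (simp add: compact_op_def)
  define D where "D n = (\<lambda>i j. compress n K i j - K i j)" for n
  assume "\<not> ?thesis"
  then have "\<forall>N. \<exists>n x. n \<ge> N \<and> in_lp p x \<and> lp_norm p x \<le> 1 \<and> lp_norm p (mat_apply (D n) x) > e"
    by (auto simp: not_le D_def)
  then obtain nn where "\<forall>N. \<exists>x. nn N \<ge> N \<and> in_lp p x \<and> lp_norm p x \<le> 1 \<and> lp_norm p (mat_apply (D (nn N)) x) > e"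
    using choice[of "\<lambda>N n. \<exists>x. n \<ge> N \<and> in_lp p x \<and> lp_norm p x \<le> 1 \<and> lp_norm p (mat_apply (D n) x) > e"] by blast
  then obtain xx where H: "\<And>N. nn N \<ge> N" "\<And>N. in_lp p (xx N)" "\<And>N. lp_norm p (xx N) \<le> 1"
     "\<And>N. lp_norm p (mat_apply (D (nn N)) (xx N)) > e"
    using choice[of "\<lambda>N x. nn N \<ge> N \<and> in_lp p x \<and> lp_norm p x \<le> 1 \<and> lp_norm p (mat_apply (D (nn N)) x) > e"] by blast
  define u where "u k = trunc (nn k) (xx k)" for k
  have ul: "in_lp p (u k)" "lp_norm p (u k) \<le> 1" for k
    using trunc_lp[OF p0 H(2)[of k], of "nn k"] H(3)[of k] by (auto simp: u_def)
  obtain r1 y where r1: "strict_mono r1" and yl: "in_lp p y"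
    and cy1: "(\<lambda>k. lp_norm p (\<lambda>i. mat_apply K (u (r1 k)) i - y i)) \<longlonglongrightarrow> 0"
    using Kc[of u] ul by blast
  obtain r2 z where r2: "strict_mono r2" and zl: "in_lp p z"
    and cz1: "(\<lambda>k. lp_norm p (\<lambda>i. mat_apply K (xx (r1 (r2 k))) i - z i)) \<longlonglongrightarrow> 0"
    using Kc[of "\<lambda>k. xx (r1 k)"] H(2,3) by blast
  define r where "r = r1 \<circ> r2"
  have rm: "strict_mono r" unfolding r_def using r1 r2 by (rule strict_mono_o)
  have cy: "(\<lambda>k. lp_norm p (\<lambda>i. mat_apply K (u (r k)) i - y i)) \<longlonglongrightarrow> 0"
    using LIMSEQ_subseq_LIMSEQ[OF cy1 r2] by (simp add: r_def o_def)
  have cz: "(\<lambda>k. lp_norm p (\<lambda>i. mat_apply K (xx (r k)) i - z i)) \<longlonglongrightarrow> 0"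
    using cz1 by (simp add: r_def o_def)
  have nr: "filterlim (\<lambda>k. nn (r k)) at_top sequentially"
  proof (rule filterlim_at_top_mono[OF filterlim_subseq[OF rm]])
    show "\<forall>\<^sub>F k in sequentially. r k \<le> nn (r k)" using H(1) by (intro always_eventually) auto
  qed
  have Kul: "in_lp p (mat_apply K (u k))" for k using bop_in_lp[OF Kb ul(1)] .
  have Kxl: "in_lp p (mat_apply K (xx k))" for k using bop_in_lp[OF Kb H(2)] .
  have yz: "y = z"
  proof
    fix i
    have A: "(\<lambda>k. mat_apply K (u (r k)) i) \<longlonglongrightarrow> y i"
      by (rule lim_coord[OF p0 _ cy]) (rule lp_diff(1)[OF p1 Kul yl])
    have B: "(\<lambda>k. mat_apply K (xx (r k)) i) \<longlonglongrightarrow> z i"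
      by (rule lim_coord[OF p0 _ cz]) (rule lp_diff(1)[OF p1 Kxl zl])
    have C: "(\<lambda>k. mat_apply K (xx (r k)) i - mat_apply K (u (r k)) i) \<longlonglongrightarrow> 0"
    proof (rule tendstoI)
      fix \<epsilon> :: real assume "\<epsilon> > 0"
      then obtain N where N: "\<And>w. in_lp p w \<Longrightarrow> lp_norm p w \<le> 1 \<Longrightarrow> (\<forall>j<N. w j = 0) \<Longrightarrow>
          norm (\<Sum>j. K i j * w j) \<le> \<epsilon> / 2"
        using row_tail[OF p Kb, of "\<epsilon> / 2" i] by auto
      have "\<forall>\<^sub>F k in sequentially. nn (r k) \<ge> N" using nr by (simp add: filterlim_at_top)
      then show "\<forall>\<^sub>F k in sequentially. dist (mat_apply K (xx (r k)) i - mat_apply K (u (r k)) i) 0 < \<epsilon>"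
      proof eventually_elim
        case (elim k)
        define w where "w = (\<lambda>j. xx (r k) j - trunc (nn (r k)) (xx (r k)) j)"
        have wl: "in_lp p w" "lp_norm p w \<le> 1"
          using tail_lp[OF p0 H(2)[of "r k"], of "nn (r k)"] H(3)[of "r k"] by (auto simp: w_def)
        have w0: "\<forall>j<N. w j = 0" using elim by (auto simp: w_def trunc_def)
        have "mat_apply K (xx (r k)) i - mat_apply K (u (r k)) i = (\<Sum>j. K i j * w j)"
          using mat_apply_diff[OF Kb H(2) ul(1)] by (simp add: w_def u_def)
        then show ?case using N[OF wl w0] \<open>\<epsilon> > 0\<close> by (simp add: dist_norm)
      qed
    qed
    have "(\<lambda>k. mat_apply K (xx (r k)) i - mat_apply K (u (r k)) i) \<longlonglongrightarrow> z i - y i"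
      by (intro tendsto_diff A B)
    from LIMSEQ_unique[OF this C] show "y i = z i" by simp
  qed
  define d where "d k = lp_norm p (mat_apply (D (nn (r k))) (xx (r k)))" for k
  define b1 where "b1 k = lp_norm p (\<lambda>i. mat_apply K (u (r k)) i - y i)" for k
  define b2 where "b2 k = lp_norm p (\<lambda>i. trunc (nn (r k)) y i - y i)" for k
  define b3 where "b3 k = lp_norm p (\<lambda>i. mat_apply K (xx (r k)) i - z i)" for k
  have dle: "d k \<le> b1 k + b2 k + b3 k" for k
  proof -
    let ?n = "nn (r k)" and ?x = "xx (r k)"
    let ?a = "trunc ?n (mat_apply K (u (r k)))"
    have eqD: "mat_apply (D ?n) ?x = (\<lambda>i. ?a i - mat_apply K ?x i)"
      using mat_apply_D[OF Kb H(2), of ?n "r k"] by (auto simp: D_def u_def fun_eq_iff)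
    have al: "in_lp p ?a" by (rule trunc_lp(1)[OF p0 Kul])
    have tyl: "in_lp p (trunc ?n y)" by (rule trunc_lp(1)[OF p0 yl])
    have "d k \<le> lp_norm p (\<lambda>i. ?a i - trunc ?n y i) + lp_norm p (\<lambda>i. trunc ?n y i - mat_apply K ?x i)"
      unfolding d_def eqD by (rule lp_tri[OF p1 al tyl Kxl])
    also have "lp_norm p (\<lambda>i. ?a i - trunc ?n y i) \<le> b1 k"
      unfolding b1_def
      by (rule lp_compare(2)[OF p0 lp_diff(1)[OF p1 Kul yl]]) (auto simp: trunc_def)
    also have "lp_norm p (\<lambda>i. trunc ?n y i - mat_apply K ?x i) \<le> b2 k + b3 k"
    proof -
      have "lp_norm p (\<lambda>i. trunc ?n y i - mat_apply K ?x i) \<le>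
            lp_norm p (\<lambda>i. trunc ?n y i - y i) + lp_norm p (\<lambda>i. y i - mat_apply K ?x i)"
        by (rule lp_tri[OF p1 tyl yl Kxl])
      then show ?thesis unfolding b2_def b3_def using yz lp_norm_commute[of p y "mat_apply K ?x"] by simp
    qed
    finally show ?thesis by simp
  qed
  have b2c: "b2 \<longlonglongrightarrow> 0" unfolding b2_def
    using filterlim_compose[OF trunc_conv[OF p0 yl] nr] by (simp add: o_def)
  have "(\<lambda>k. b1 k + b2 k + b3 k) \<longlonglongrightarrow> 0 + 0 + 0"
    using cy b2c cz unfolding b1_def b3_def by (intro tendsto_add) auto
  then have bc: "(\<lambda>k. b1 k + b2 k + b3 k) \<longlonglongrightarrow> 0" by simp
  have nd: "\<forall>k. norm (d k) \<le> b1 k + b2 k + b3 k" using dle lp_norm_nonneg by (simp add: d_def)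
  have "(\<lambda>k. d k) \<longlonglongrightarrow> 0" by (rule Lim_null_comparison[OF always_eventually[OF nd] bc])
  then have "\<forall>\<^sub>F k in sequentially. d k < e" using e by (rule order_tendstoD(2))
  then obtain N where "\<forall>k\<ge>N. d k < e" by (auto simp: eventually_sequentially)
  then obtain k where "d k < e" by blast
  then show False using H(4)[of "r k"] by (simp add: d_def)
qed

lemma opnorm_conv:
  assumes p: "p > 1" and K: "compact_op p K"
  shows "(\<lambda>n. op_norm p (\<lambda>i j. compress n K i j - K i j)) \<longlonglongrightarrow> 0"
proof (rule LIMSEQ_I)
  fix e :: real assume e: "e > 0"
  obtain N where N: "\<And>n x. n \<ge> N \<Longrightarrow> in_lp p x \<Longrightarrow> lp_norm p x \<le> 1 \<Longrightarrow>
     lp_norm p (mat_apply (\<lambda>i j. compress n K i j - K i j) x) \<le> e / 2"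
    using main_L[OF p K, of "e / 2"] e by auto
  show "\<exists>no. \<forall>n\<ge>no. norm (op_norm p (\<lambda>i j. compress n K i j - K i j) - 0) < e"
  proof (intro exI allI impI)
    fix n assume "n \<ge> N"
    then have "0 \<le> op_norm p (\<lambda>i j. compress n K i j - K i j)"
      "op_norm p (\<lambda>i j. compress n K i j - K i j) \<le> e / 2"
      using op_norm_le[of p "e / 2" "\<lambda>i j. compress n K i j - K i j"] N p e by auto
    then show "norm (op_norm p (\<lambda>i j. compress n K i j - K i j) - 0) < e" using e by simp
  qed
qed

theorem mainTheorem12:
  fixes p :: real and K :: mat
  assumes "1 < p"
    and "compact_dual_op p K"
  shows "(\<lambda>n. max_norm p (\<lambda>i j. compress n K i j - K i j)) \<longlonglongrightarrow> 0"
proof -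
  have K1: "compact_op p K" and K2: "compact_op p (transpose_mat K)"
    using assms(2) by (auto simp: compact_dual_op_def)
  have tr: "transpose_mat (\<lambda>i j. compress n K i j - K i j) =
            (\<lambda>i j. compress n (transpose_mat K) i j - transpose_mat K i j)" for n
    by (auto simp: transpose_mat_def compress_def fun_eq_iff)
  have "(\<lambda>n. max (op_norm p (\<lambda>i j. compress n K i j - K i j))
                 (op_norm p (\<lambda>i j. compress n (transpose_mat K) i j - transpose_mat K i j))) \<longlonglongrightarrow> max 0 0"
    by (intro tendsto_max opnorm_conv[OF assms(1) K1] opnorm_conv[OF assms(1) K2])
  then show ?thesis by (simp add: max_norm_def tr)
qed

end
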